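(* Let $S=(n,\phi,F)$ be a semicoherent system whose lifetime distribution has no ties. Then for every $k\in[n]$, $$p_k:=\Pr(T=X_{k:n})=\sum_{A\subseteq[n]}m_\phi(A)\,\Pr\Big(X_{k:n}=\min_{i\in A}X_i\Big).$$
   Context: Semicoherent system $S=(n,\phi,F)$: $\phi:2^{[n]}\to\{0,1\}$ nondecreasing (subsets identified with Boolean vectors), $\phi(\varnothing)=0$, $\phi([n])=1$; $F$ is the joint c.d.f. of nonnegative component lifetimes $X_1,\ldots,X_n$ with $\Pr(X_i=X_k)=0$ for $i\neq k$. System lifetime $T=\inf\{t\geq0:\phi(\{i:X_i>t\})=0\}$. $X_{k:n}$ is the $k$th smallest of $X_1,\ldots,X_n$. Möbius transform: $m_\phi(A)=\sum_{B\subseteq A}(-1)^{|A|-|B|}\phi(B)$. Convention: $\min_{i\in\varnothing}X_i=+\infty$ (so the $A=\varnothing$ term vanishes). *)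

theory Defs
  imports "HOL-Probability.Probability"
begin

text \<open>Structure function phi on subsets of [n] = {1..n}, values 0/1 encoded as bool.\<close>
definition semicoherent_sf :: "nat \<Rightarrow> (nat set \<Rightarrow> bool) \<Rightarrow> bool" where
  "semicoherent_sf n phi \<longleftrightarrow>
     (\<forall>A B. A \<subseteq> B \<longrightarrow> B \<subseteq> {1..n} \<longrightarrow> phi A \<longrightarrow> phi B)
     \<and> \<not> phi {} \<and> phi {1..n}"

definition mobius_sf :: "(nat set \<Rightarrow> bool) \<Rightarrow> nat set \<Rightarrow> real" where
  "mobius_sf phi A = (\<Sum>B\<in>Pow A. (-1) ^ (card A - card B) * of_bool (phi B))"

definition sys_lifetime :: "nat \<Rightarrow> (nat set \<Rightarrow> bool) \<Rightarrow> (nat \<Rightarrow> 'w \<Rightarrow> real) \<Rightarrow> 'w \<Rightarrow> real" where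
  "sys_lifetime n phi X \<omega> = Inf {t. t \<ge> 0 \<and> \<not> phi {i\<in>{1..n}. X i \<omega> > t}}"

definition order_stat :: "nat \<Rightarrow> nat \<Rightarrow> (nat \<Rightarrow> 'w \<Rightarrow> real) \<Rightarrow> 'w \<Rightarrow> real" where
  "order_stat k n X \<omega> = sort (map (\<lambda>i. X i \<omega>) [1..<n+1]) ! (k - 1)"

end

theory Submission
  imports Defs
begin

lemma mob_inv:
  assumes "finite B"
  shows "(\<Sum>A\<in>Pow B. mobius_sf phi A) = of_bool (phi B)"
proof -
  define g where "g S = (\<Sum>T\<in>Pow S. (-1::real) ^ card T * of_bool (phi T))" for S
  have gm: "g S = (-1) ^ card S * mobius_sf phi S" if "finite S" for S
  proof -
    have "(-1) ^ card S * mobius_sf phi S = (\<Sum>T\<in>Pow S. (-1::real) ^ card S * ((-1) ^ (card S - card T) * of_bool (phi T)))"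
      unfolding mobius_sf_def by (simp add: sum_distrib_left)
    also have "\<dots> = g S" unfolding g_def
    proof (rule sum.cong[OF refl])
      fix T assume "T \<in> Pow S"
      then have "card T \<le> card S" using that by (simp add: card_mono)
      then have "(-1::real) ^ card S * (-1) ^ (card S - card T) = (-1) ^ card T"
      proof -
        obtain d where d: "card S = card T + d" using \<open>card T \<le> card S\<close> le_Suc_ex by blast
        have "(-1::real) ^ card S * (-1) ^ (card S - card T) = (-1) ^ card T * ((-1) ^ d * (-1) ^ d)"
          by (simp add: d power_add)
        also have "(-1::real) ^ d * (-1) ^ d = 1" by (simp flip: power_add)
        finally show ?thesis by simp
      qed
      then show "(-1::real) ^ card S * ((-1) ^ (card S - card T) * of_bool (phi T)) = (-1) ^ card T * of_bool (phi T)"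
        by (metis mult.assoc)
    qed
    finally show ?thesis by simp
  qed
  have "(\<lambda>T. of_bool (phi T) :: real) B = (\<Sum>T \<in> Pow B. (-1) ^ card T * g T)"
    by (rule inclusion_exclusion_symmetric[where g=g]) (auto simp: g_def assms)
  also have "\<dots> = (\<Sum>T \<in> Pow B. mobius_sf phi T)"
  proof (rule sum.cong[OF refl])
    fix T assume "T \<in> Pow B"
    then have "finite T" using assms finite_subset by blast
    have "(-1::real) ^ card T * (-1) ^ card T = 1" by (simp flip: power_add)
    then show "(-1) ^ card T * g T = mobius_sf phi T" using gm[OF \<open>finite T\<close>]
      by (metis mult.assoc mult_1)
  qed
  finally show ?thesis by simp
qed

lemma inf_eq_iff:
  fixes x :: "nat \<Rightarrow> real"
  assumes "finite A"
  shows "of_bool (ereal v = (INF i\<in>A. ereal (x i))) =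
         (of_bool (A \<subseteq> {i. v \<le> x i}) - of_bool (A \<subseteq> {i. v < x i}) :: real)"
proof (cases "A = {}")
  case True then show ?thesis by (simp add: top_ereal_def)
next
  case False
  let ?I = "INF i\<in>A. ereal (x i)"
  have "?I = Min ((\<lambda>i. ereal (x i)) ` A)"
    using assms False by (simp add: cInf_eq_Min)
  moreover have "Min ((\<lambda>i. ereal (x i)) ` A) \<in> (\<lambda>i. ereal (x i)) ` A"
    using assms False by (intro Min_in) auto
  ultimately obtain j where j: "j \<in> A" "?I = ereal (x j)"
    by (metis (no_types, lifting) imageE)
  have low: "?I \<le> ereal (x i)" if "i \<in> A" for i using that by (rule INF_lower)
  have "(ereal v = ?I) \<longleftrightarrow> (A \<subseteq> {i. v \<le> x i}) \<and> \<not> (A \<subseteq> {i. v < x i})"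
  proof
    assume "ereal v = ?I"
    then show "(A \<subseteq> {i. v \<le> x i}) \<and> \<not> (A \<subseteq> {i. v < x i})"
      using j low by force
  next
    assume h: "(A \<subseteq> {i. v \<le> x i}) \<and> \<not> (A \<subseteq> {i. v < x i})"
    then obtain i0 where "i0 \<in> A" "x i0 = v" by force
    then have "?I \<le> ereal v" using low by force
    moreover have "ereal v \<le> ?I" using h by (auto intro!: INF_greatest)
    ultimately show "ereal v = ?I" by simp
  qed
  moreover have "A \<subseteq> {i. v < x i} \<Longrightarrow> A \<subseteq> {i. v \<le> x i}" by auto
  ultimately show ?thesis by auto
qed

lemma mob_sum:
  fixes x :: "nat \<Rightarrow> real"
  shows "(\<Sum>A\<in>Pow {1..n}. mobius_sf phi A * of_bool (ereal v = (INF i\<in>A. ereal (x i)))) =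
         of_bool (phi {i\<in>{1..n}. v \<le> x i}) - of_bool (phi {i\<in>{1..n}. v < x i})"
proof -
  have sub: "(\<Sum>A\<in>Pow {1..n}. mobius_sf phi A * of_bool (A \<subseteq> {i. P i})) = of_bool (phi {i\<in>{1..n}. P i})" for P
  proof -
    have "(\<Sum>A\<in>Pow {1..n}. mobius_sf phi A * of_bool (A \<subseteq> {i. P i}))
        = (\<Sum>A\<in>Pow {i\<in>{1..n}. P i}. mobius_sf phi A)"
      by (rule sum.mono_neutral_cong_right) auto
    also have "\<dots> = of_bool (phi {i\<in>{1..n}. P i})" by (rule mob_inv) simp
    finally show ?thesis .
  qed
  have "(\<Sum>A\<in>Pow {1..n}. mobius_sf phi A * of_bool (ereal v = (INF i\<in>A. ereal (x i)))) =
        (\<Sum>A\<in>Pow {1..n}. mobius_sf phi A * of_bool (A \<subseteq> {i. v \<le> x i}) - mobius_sf phi A * of_bool (A \<subseteq> {i. v < x i}))"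
    by (rule sum.cong[OF refl]) (simp add: inf_eq_iff finite_subset right_diff_distrib)
  also have "\<dots> = of_bool (phi {i\<in>{1..n}. v \<le> x i}) - of_bool (phi {i\<in>{1..n}. v < x i})"
    unfolding sum_subtractf sub[of "\<lambda>i. v \<le> x i"] sub[of "\<lambda>i. v < x i"] ..
  finally show ?thesis .
qed

lemma sc_mono: "semicoherent_sf n phi \<Longrightarrow> phi A \<Longrightarrow> A \<subseteq> B \<Longrightarrow> B \<subseteq> {1..n} \<Longrightarrow> phi B"
  unfolding semicoherent_sf_def by blast

lemma T_basic:
  assumes "semicoherent_sf n phi"
  shows "{t. t \<ge> 0 \<and> \<not> phi {i\<in>{1..n}. X i \<omega> > t}} \<noteq> {}"
    and "0 \<le> sys_lifetime n phi X \<omega>"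
proof -
  define t0 where "t0 = Max (insert 0 ((\<lambda>i. X i \<omega>) ` {1..n}))"
  have le: "X i \<omega> \<le> t0" if "i \<in> {1..n}" for i using that unfolding t0_def by (intro Max_ge) auto
  have e: "{i\<in>{1..n}. X i \<omega> > t0} = {}"
    using le by (force simp: not_less)
  have "0 \<le> t0" unfolding t0_def by (auto intro: Max_ge)
  then have "t0 \<in> {t. t \<ge> 0 \<and> \<not> phi {i\<in>{1..n}. X i \<omega> > t}}"
    using assms \<open>0 \<le> t0\<close> unfolding mem_Collect_eq e semicoherent_sf_def by simp
  then show ne: "{t. t \<ge> 0 \<and> \<not> phi {i\<in>{1..n}. X i \<omega> > t}} \<noteq> {}" by blast
  show "0 \<le> sys_lifetime n phi X \<omega>"
    unfolding sys_lifetime_def using ne by (intro cInf_greatest) auto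
qed

lemma T_le:
  assumes sc: "semicoherent_sf n phi" and s: "0 \<le> s"
  shows "sys_lifetime n phi X \<omega> \<le> s \<longleftrightarrow> \<not> phi {i\<in>{1..n}. X i \<omega> > s}"
proof -
  let ?S = "{t. t \<ge> 0 \<and> \<not> phi {i\<in>{1..n}. X i \<omega> > t}}"
  have ne: "?S \<noteq> {}" by (rule T_basic(1)[OF sc])
  have bdd: "bdd_below ?S" by (rule bdd_belowI[of _ 0]) auto
  show ?thesis
  proof
    assume "\<not> phi {i\<in>{1..n}. X i \<omega> > s}"
    then have "s \<in> ?S" using s by simp
    then show "sys_lifetime n phi X \<omega> \<le> s"
      unfolding sys_lifetime_def using bdd by (rule cInf_lower)
  next
    assume le: "sys_lifetime n phi X \<omega> \<le> s"
    show "\<not> phi {i\<in>{1..n}. X i \<omega> > s}"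
    proof
      let ?U = "{i\<in>{1..n}. X i \<omega> > s}"
      assume ph: "phi ?U"
      have "?U \<noteq> {}"
      proof
        assume "?U = {}"
        then have "phi {}" using ph by metis
        then show False using sc by (simp add: semicoherent_sf_def)
      qed
      let ?m = "Min ((\<lambda>i. X i \<omega>) ` ?U)"
      have "?m \<in> (\<lambda>i. X i \<omega>) ` ?U" using \<open>?U \<noteq> {}\<close> by (intro Min_in) auto
      then have ms: "s < ?m" by auto
      have "?m \<le> t" if "t \<in> ?S" for t
      proof (rule ccontr)
        assume "\<not> ?m \<le> t"
        have "?U \<subseteq> {i\<in>{1..n}. X i \<omega> > t}"
        proof (rule subsetI)
          fix i assume i: "i \<in> ?U"
          then have "?m \<le> X i \<omega>" by (intro Min_le) auto
          with \<open>\<not> ?m \<le> t\<close> have "t < X i \<omega>" by linarith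
          with i show "i \<in> {i\<in>{1..n}. X i \<omega> > t}" by simp
        qed
        then have "phi {i\<in>{1..n}. X i \<omega> > t}"
          by (rule sc_mono[OF sc ph]) auto
        then show False using that by simp
      qed
      then have "?m \<le> sys_lifetime n phi X \<omega>"
        unfolding sys_lifetime_def using ne by (intro cInf_greatest) auto
      then show False using le ms by simp
    qed
  qed
qed

lemma T_eq:
  assumes sc: "semicoherent_sf n phi" and nn: "\<forall>i\<in>{1..n}. 0 \<le> X i \<omega>" and v: "0 \<le> v"
  shows "sys_lifetime n phi X \<omega> = v \<longleftrightarrow>
     phi {i\<in>{1..n}. v \<le> X i \<omega>} \<and> \<not> phi {i\<in>{1..n}. v < X i \<omega>}"
proof -
  let ?T = "sys_lifetime n phi X \<omega>"
  let ?p = "Max (insert 0 {X i \<omega> |i. i\<in>{1..n} \<and> X i \<omega> < v})"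
  have fin: "finite {X i \<omega> |i. i\<in>{1..n} \<and> X i \<omega> < v}" by auto
  have p0: "0 \<le> ?p" using fin by (intro Max_ge) auto
  have pv: "?p < v" if "0 < v"
  proof -
    have "?p \<in> insert 0 {X i \<omega> |i. i\<in>{1..n} \<and> X i \<omega> < v}" using fin by (intro Max_in) auto
    then show ?thesis using that by auto
  qed
  have Ueq: "{i\<in>{1..n}. s < X i \<omega>} = {i\<in>{1..n}. v \<le> X i \<omega>}" if "?p \<le> s" "s < v" for s
  proof -
    have "X i \<omega> \<le> s" if "i \<in> {1..n}" "X i \<omega> < v" for i
    proof -
      have "X i \<omega> \<le> ?p" using fin that by (intro Max_ge) auto
      then show ?thesis using \<open>?p \<le> s\<close> by linarith
    qed
    then show ?thesis using \<open>s < v\<close> by force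
  qed
  have T0: "0 \<le> ?T" by (rule T_basic[OF sc])
  have all: "{i\<in>{1..n}. 0 \<le> X i \<omega>} = {1..n}" using nn by auto
  show ?thesis
  proof
    assume Tv: "?T = v"
    then have "\<not> phi {i\<in>{1..n}. v < X i \<omega>}" using T_le[OF sc v, where X=X and \<omega>=\<omega>] by simp
    moreover have "phi {i\<in>{1..n}. v \<le> X i \<omega>}"
    proof (cases "v = 0")
      case True then show ?thesis using sc all by (simp add: semicoherent_sf_def)
    next
      case False
      then have "0 < v" using v by simp
      show ?thesis
      proof (rule ccontr)
        assume "\<not> phi {i\<in>{1..n}. v \<le> X i \<omega>}"
        then have "\<not> phi {i\<in>{1..n}. ?p < X i \<omega>}" using Ueq[of ?p] pv[OF \<open>0 < v\<close>] by simp
        then have "?T \<le> ?p" using T_le[OF sc p0, where X=X and \<omega>=\<omega>] by simp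
        then show False using Tv pv[OF \<open>0 < v\<close>] by linarith
      qed
    qed
    ultimately show "phi {i\<in>{1..n}. v \<le> X i \<omega>} \<and> \<not> phi {i\<in>{1..n}. v < X i \<omega>}" by simp
  next
    assume h: "phi {i\<in>{1..n}. v \<le> X i \<omega>} \<and> \<not> phi {i\<in>{1..n}. v < X i \<omega>}"
    then have "?T \<le> v" using T_le[OF sc v, where X=X and \<omega>=\<omega>] by simp
    moreover have "\<not> ?T < v"
    proof
      assume Tl: "?T < v"
      let ?s = "max ?T ?p"
      have "0 < v" using Tl T0 by simp
      have "?s < v" using Tl pv[OF \<open>0 < v\<close>] by simp
      have "0 \<le> ?s" using T0 by simp
      have "?T \<le> ?s" by simp
      then have "\<not> phi {i\<in>{1..n}. ?s < X i \<omega>}" using T_le[OF sc \<open>0 \<le> ?s\<close>, where X=X and \<omega>=\<omega>] by simp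
      then show False using Ueq[of ?s] \<open>?s < v\<close> h by simp
    qed
    ultimately show "?T = v" by simp
  qed
qed

lemma sorted_nth_le_card:
  fixes ys :: "real list"
  assumes "sorted ys" "j < length ys"
  shows "ys ! j \<le> t \<longleftrightarrow> j < card {i. i < length ys \<and> ys ! i \<le> t}"
proof
  assume h: "ys ! j \<le> t"
  have "{..j} \<subseteq> {i. i < length ys \<and> ys ! i \<le> t}"
  proof
    fix i assume "i \<in> {..j}"
    then have "ys ! i \<le> ys ! j" "i < length ys" using assms by (auto intro: sorted_nth_mono)
    then show "i \<in> {i. i < length ys \<and> ys ! i \<le> t}" using h by auto
  qed
  from card_mono[OF _ this] show "j < card {i. i < length ys \<and> ys ! i \<le> t}" by simp
next
  assume h: "j < card {i. i < length ys \<and> ys ! i \<le> t}"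
  show "ys ! j \<le> t"
  proof (rule ccontr)
    assume "\<not> ys ! j \<le> t"
    have "{i. i < length ys \<and> ys ! i \<le> t} \<subseteq> {..<j}"
    proof
      fix i assume i: "i \<in> {i. i < length ys \<and> ys ! i \<le> t}"
      show "i \<in> {..<j}"
      proof (rule ccontr)
        assume "i \<notin> {..<j}"
        then have "ys ! j \<le> ys ! i" using assms i by (auto intro: sorted_nth_mono)
        then show False using i \<open>\<not> ys ! j \<le> t\<close> by auto
      qed
    qed
    from card_mono[OF _ this] h show False by simp
  qed
qed

lemma order_stat_le:
  assumes "k \<in> {1..n}"
  shows "order_stat k n X \<omega> \<le> t \<longleftrightarrow> k \<le> card {i\<in>{1..n}. X i \<omega> \<le> t}"
proof -
  let ?xs = "map (\<lambda>i. X i \<omega>) [1..<n+1]"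
  have "order_stat k n X \<omega> \<le> t \<longleftrightarrow> k - 1 < card {i. i < length (sort ?xs) \<and> sort ?xs ! i \<le> t}"
    unfolding order_stat_def using assms by (intro sorted_nth_le_card) auto
  also have "card {i. i < length (sort ?xs) \<and> sort ?xs ! i \<le> t} = length (filter (\<lambda>y. y \<le> t) (sort ?xs))"
    by (rule length_filter_conv_card[symmetric])
  also have "\<dots> = length (filter (\<lambda>y. y \<le> t) ?xs)"
    by (simp only: filter_sort length_sort)
  also have "\<dots> = length (filter (\<lambda>i. X i \<omega> \<le> t) [1..<n+1])"
    by (simp only: filter_map length_map o_def)
  also have "\<dots> = card {i\<in>{1..n}. X i \<omega> \<le> t}"
  proof -
    have "length (filter (\<lambda>i. X i \<omega> \<le> t) [1..<n+1]) = card (set (filter (\<lambda>i. X i \<omega> \<le> t) [1..<n+1]))"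
      by (rule distinct_card[symmetric]) simp
    also have "set (filter (\<lambda>i. X i \<omega> \<le> t) [1..<n+1]) = {i\<in>{1..n}. X i \<omega> \<le> t}" by auto
    finally show ?thesis .
  qed
  finally show ?thesis using assms by auto
qed

lemma order_stat_in:
  assumes "k \<in> {1..n}"
  shows "\<exists>i\<in>{1..n}. order_stat k n X \<omega> = X i \<omega>"
proof -
  let ?xs = "map (\<lambda>i. X i \<omega>) [1..<n+1]"
  have "sort ?xs ! (k - 1) \<in> set (sort ?xs)" using assms by (intro nth_mem) auto
  then show ?thesis unfolding order_stat_def by auto
qed

lemma os_meas:
  assumes X: "\<And>i. i \<in> {1..n} \<Longrightarrow> X i \<in> borel_measurable M" and k: "k \<in> {1..n}"
  shows "(\<lambda>\<omega>. order_stat k n X \<omega>) \<in> borel_measurable M"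
  unfolding borel_measurable_iff_le
proof
  fix a :: real
  define f where "f \<omega> = (\<Sum>i\<in>{1..n}. if X i \<omega> \<le> a then 1 else 0 :: real)" for \<omega>
  have fm: "f \<in> borel_measurable M"
    unfolding f_def
  proof (rule borel_measurable_sum)
    fix i assume "i \<in> {1..n}"
    then have [measurable]: "X i \<in> borel_measurable M" by (rule X)
    show "(\<lambda>\<omega>. if X i \<omega> \<le> a then 1 else 0 :: real) \<in> borel_measurable M" by measurable
  qed
  have cf: "real (card {i\<in>{1..n}. X i \<omega> \<le> a}) = f \<omega>" for \<omega>
    unfolding f_def by (simp add: sum.If_cases Int_def)
  have "{w \<in> space M. order_stat k n X w \<le> a} = {w \<in> space M. real k \<le> f w}"
  proof -
    have "order_stat k n X w \<le> a \<longleftrightarrow> k \<le> card {i\<in>{1..n}. X i w \<le> a}" for w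
      by (rule order_stat_le[OF k])
    then show ?thesis using cf by (metis (no_types, lifting) of_nat_le_iff)
  qed
  also have "\<dots> \<in> sets M" using fm unfolding borel_measurable_iff_ge by blast
  finally show "{w \<in> space M. order_stat k n X w \<le> a} \<in> sets M" .
qed

lemma T_meas:
  assumes X: "\<And>i. i \<in> {1..n} \<Longrightarrow> X i \<in> borel_measurable M" and sc: "semicoherent_sf n phi"
  shows "(\<lambda>\<omega>. sys_lifetime n phi X \<omega>) \<in> borel_measurable M"
  unfolding borel_measurable_iff_le
proof
  fix a :: real
  show "{w \<in> space M. sys_lifetime n phi X w \<le> a} \<in> sets M"
  proof (cases "a < 0")
    case True
    then have "{w \<in> space M. sys_lifetime n phi X w \<le> a} = {}"
    proof -
      have "0 \<le> sys_lifetime n phi X w" for w by (rule T_basic(2)[OF sc])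
      then show ?thesis using True by (auto simp: not_le intro: less_le_trans)
    qed
    then show ?thesis by (metis sets.empty_sets)
  next
    case False
    then have "{w \<in> space M. sys_lifetime n phi X w \<le> a} =
       {w \<in> space M. \<exists>B\<in>{B\<in>Pow {1..n}. \<not> phi B}. \<forall>i\<in>{1..n}. (a < X i w) = (i \<in> B)}"
    proof -
      have h: "sys_lifetime n phi X w \<le> a \<longleftrightarrow> \<not> phi {i\<in>{1..n}. a < X i w}" for w
        by (rule T_le[OF sc]) (use False in simp)
      have h2: "(\<not> phi {i\<in>{1..n}. a < X i w}) \<longleftrightarrow>
          (\<exists>B\<in>{B\<in>Pow {1..n}. \<not> phi B}. \<forall>i\<in>{1..n}. (a < X i w) = (i \<in> B))" for w
      proof
        assume "\<not> phi {i\<in>{1..n}. a < X i w}"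
        then show "\<exists>B\<in>{B\<in>Pow {1..n}. \<not> phi B}. \<forall>i\<in>{1..n}. (a < X i w) = (i \<in> B)"
          by (intro bexI[of _ "{i\<in>{1..n}. a < X i w}"]) auto
      next
        assume "\<exists>B\<in>{B\<in>Pow {1..n}. \<not> phi B}. \<forall>i\<in>{1..n}. (a < X i w) = (i \<in> B)"
        then obtain B where B: "B \<subseteq> {1..n}" "\<not> phi B" "\<forall>i\<in>{1..n}. (a < X i w) = (i \<in> B)" by auto
        then have "{i\<in>{1..n}. a < X i w} = B" by auto
        then show "\<not> phi {i\<in>{1..n}. a < X i w}" using B by simp
      qed
      show ?thesis using h h2 by blast
    qed
    also have "\<dots> \<in> sets M"
    proof (rule sets.sets_Collect_finite_Ex)
      fix B assume "B \<in> {B\<in>Pow {1..n}. \<not> phi B}"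
      show "{w \<in> space M. \<forall>i\<in>{1..n}. (a < X i w) = (i \<in> B)} \<in> sets M"
      proof (rule sets.sets_Collect_finite_All)
        fix i assume "i \<in> {1..n}"
        then have [measurable]: "X i \<in> borel_measurable M" by (rule X)
        show "{w \<in> space M. (a < X i w) = (i \<in> B)} \<in> sets M"
          by (cases "i \<in> B") simp_all
      qed simp
    qed simp
    finally show ?thesis .
  qed
qed

theorem proposition7:
  fixes M :: "'w measure" and n k :: nat and phi :: "nat set \<Rightarrow> bool"
    and X :: "nat \<Rightarrow> 'w \<Rightarrow> real"
  assumes "prob_space M"
    and "semicoherent_sf n phi"
    and "\<And>i. i \<in> {1..n} \<Longrightarrow> X i \<in> borel_measurable M"
    and "\<And>i. i \<in> {1..n} \<Longrightarrow> AE \<omega> in M. X i \<omega> \<ge> 0"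
    and "\<And>i j. i \<in> {1..n} \<Longrightarrow> j \<in> {1..n} \<Longrightarrow> i \<noteq> j \<Longrightarrow>
           measure M {\<omega> \<in> space M. X i \<omega> = X j \<omega>} = 0"
    and "k \<in> {1..n}"
  shows "measure M {\<omega> \<in> space M. sys_lifetime n phi X \<omega> = order_stat k n X \<omega>}
       = (\<Sum>A\<in>Pow {1..n}. mobius_sf phi A *
            measure M {\<omega> \<in> space M.
               ereal (order_stat k n X \<omega>) = (INF i\<in>A. ereal (X i \<omega>))})"
proof -
  interpret prob_space M by (rule assms(1))
  note sc = assms(2) and Xm = assms(3) and k = assms(6)
  define E where "E = {\<omega> \<in> space M. sys_lifetime n phi X \<omega> = order_stat k n X \<omega>}"
  define Ea where "Ea A = {\<omega> \<in> space M. ereal (order_stat k n X \<omega>) = (INF i\<in>A. ereal (X i \<omega>))}" for A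
  have [measurable]: "(\<lambda>\<omega>. order_stat k n X \<omega>) \<in> borel_measurable M" by (rule os_meas[OF Xm k])
  have [measurable]: "(\<lambda>\<omega>. sys_lifetime n phi X \<omega>) \<in> borel_measurable M" by (rule T_meas[OF Xm sc])
  have Em: "E \<in> sets M" unfolding E_def by measurable
  have Eam: "Ea A \<in> sets M" if "A \<in> Pow {1..n}" for A
  proof -
    have "(\<lambda>\<omega>. INF i\<in>A. ereal (X i \<omega>)) \<in> borel_measurable M"
    proof (rule borel_measurable_INF)
      show "countable A" using that by (auto intro: countable_finite finite_subset)
      fix i assume "i \<in> A"
      then have "i \<in> {1..n}" using that by auto
      then have [measurable]: "X i \<in> borel_measurable M" by (rule Xm)
      show "(\<lambda>\<omega>. ereal (X i \<omega>)) \<in> borel_measurable M" by measurable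
    qed
    note [measurable] = this
    show ?thesis unfolding Ea_def by measurable
  qed
  have AEnn: "AE \<omega> in M. \<forall>i\<in>{1..n}. 0 \<le> X i \<omega>"
    by (rule AE_finite_allI) (auto intro: assms(4))
  have pt: "indicator E \<omega> = (\<Sum>A\<in>Pow {1..n}. mobius_sf phi A * indicator (Ea A) \<omega>)"
    if \<omega>: "\<omega> \<in> space M" and nn: "\<forall>i\<in>{1..n}. 0 \<le> X i \<omega>" for \<omega>
  proof -
    let ?v = "order_stat k n X \<omega>"
    have v0: "0 \<le> ?v" using order_stat_in[OF k, of X \<omega>] nn by auto
    have sub: "phi {i\<in>{1..n}. ?v < X i \<omega>} \<Longrightarrow> phi {i\<in>{1..n}. ?v \<le> X i \<omega>}"
      by (erule sc_mono[OF sc]) auto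
    have "indicator E \<omega> = (of_bool (sys_lifetime n phi X \<omega> = ?v) :: real)"
      using \<omega> unfolding E_def by (simp add: indicator_def)
    also have "\<dots> = of_bool (phi {i\<in>{1..n}. ?v \<le> X i \<omega>}) - of_bool (phi {i\<in>{1..n}. ?v < X i \<omega>})"
    proof -
      have "sys_lifetime n phi X \<omega> = ?v \<longleftrightarrow> phi {i\<in>{1..n}. ?v \<le> X i \<omega>} \<and> \<not> phi {i\<in>{1..n}. ?v < X i \<omega>}"
        by (rule T_eq) (use sc nn v0 in auto)
      then show ?thesis using sub by auto
    qed
    also have "\<dots> = (\<Sum>A\<in>Pow {1..n}. mobius_sf phi A * of_bool (ereal ?v = (INF i\<in>A. ereal (X i \<omega>))))"
      by (rule mob_sum[symmetric])
    also have "\<dots> = (\<Sum>A\<in>Pow {1..n}. mobius_sf phi A * indicator (Ea A) \<omega>)"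
      using \<omega> unfolding Ea_def by (simp add: indicator_def)
    finally show ?thesis .
  qed
  have "measure M E = integral\<^sup>L M (indicator E)"
    using Em by simp
  also have "\<dots> = integral\<^sup>L M (\<lambda>\<omega>. \<Sum>A\<in>Pow {1..n}. mobius_sf phi A * indicator (Ea A) \<omega>)"
  proof (rule integral_cong_AE)
    show "indicator E \<in> borel_measurable M" using Em by simp
    show "(\<lambda>\<omega>. \<Sum>A\<in>Pow {1..n}. mobius_sf phi A * indicator (Ea A) \<omega>) \<in> borel_measurable M"
      using Eam by (intro borel_measurable_sum borel_measurable_times borel_measurable_const) simp_all
    show "AE \<omega> in M. indicator E \<omega> = (\<Sum>A\<in>Pow {1..n}. mobius_sf phi A * indicator (Ea A) \<omega>)"
      using AEnn by (rule AE_mp) (rule AE_I2, use pt in blast)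
  qed
  also have "\<dots> = (\<Sum>A\<in>Pow {1..n}. integral\<^sup>L M (\<lambda>\<omega>. mobius_sf phi A * indicator (Ea A) \<omega>))"
    by (rule Bochner_Integration.integral_sum) (use Eam in \<open>auto intro!: integrable_mult_right integrable_real_indicator simp: emeasure_eq_measure\<close>)
  also have "\<dots> = (\<Sum>A\<in>Pow {1..n}. mobius_sf phi A * measure M (Ea A))"
    by (rule sum.cong[OF refl]) (use Eam sets.sets_into_space in \<open>auto simp: Int_absorb2\<close>)
  finally show ?thesis unfolding E_def Ea_def .
qed

end
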